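(* Let $\mathbb{K}$ be an algebraically closed field of characteristic zero and let $D=\partial_x+(ay+b)\partial_y$ be a derivation of $\mathbb{K}[x,y]$ with $a,b\in\mathbb{K}[x]$, $a\neq 0$, and $\deg a\geq 1$ or $\deg b\geq 1$. Then $\mathrm{Aut}(D)\neq\{\mathrm{id}\}$ if and only if there exists $h\in\mathbb{K}[x]$ with $D(h)=ah+b$ (that is, $h'=ah+b$). In particular, if $\mathrm{Aut}(D)\neq\{\mathrm{id}\}$ and $b\neq 0$, then $\deg b\geq\deg a$.
   Context: $\mathrm{Aut}(D)$ denotes the group of $\mathbb{K}$-algebra automorphisms $\rho$ of $\mathbb{K}[x,y]$ with $\rho D=D\rho$. *)

theory Defs
  imports "HOL-Computational_Algebra.Polynomial"
begin

text \<open>K[x,y] is represented as ('k poly) poly = (K[x])[y]: the outer variable is y,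
  the coefficients are polynomials in x.\<close>

definition const2 :: "'k::comm_ring_1 \<Rightarrow> 'k poly poly" where
  "const2 c = [:[:c:]:]"

definition kalg_aut :: "('k::field poly poly \<Rightarrow> 'k poly poly) \<Rightarrow> bool" where
  "kalg_aut \<rho> \<longleftrightarrow> bij \<rho> \<and> (\<forall>p q. \<rho> (p + q) = \<rho> p + \<rho> q)
     \<and> (\<forall>p q. \<rho> (p * q) = \<rho> p * \<rho> q) \<and> (\<forall>c. \<rho> (const2 c) = const2 c)"

definition derD :: "'k::field poly \<Rightarrow> 'k poly \<Rightarrow> 'k poly poly \<Rightarrow> 'k poly poly" where
  "derD a b p = map_poly pderiv p + [:b, a:] * pderiv p"

definition AutD :: "'k::field poly \<Rightarrow> 'k poly \<Rightarrow> ('k poly poly \<Rightarrow> 'k poly poly) set" where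
  "AutD a b = {\<rho>. kalg_aut \<rho> \<and> \<rho> \<circ> derD a b = derD a b \<circ> \<rho>}"

end

theory Submission
  imports Defs
begin

abbreviation Dx :: "'k::field_char_0 poly poly \<Rightarrow> 'k poly poly" where
  "Dx p \<equiv> map_poly pderiv p"

lemma coeff_Dx: "coeff (Dx p) n = pderiv (coeff p n)"
  by (simp add: coeff_map_poly)

lemma Dx_add: "Dx (p + q) = Dx p + Dx q"
  by (rule poly_eqI) (simp add: coeff_Dx pderiv_add)

lemma Dx_diff: "Dx (p - q) = Dx p - Dx q"
  by (rule poly_eqI) (simp add: coeff_Dx pderiv_diff)

lemma Dx_const: "Dx [:c:] = [:pderiv c:]"
  by (rule poly_eqI) (simp add: coeff_Dx coeff_pCons split: nat.splits)

lemma pderiv_sum': "pderiv (sum f A) = sum (\<lambda>i. pderiv (f i)) A"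
  by (induction A rule: infinite_finite_induct) (auto simp: pderiv_add)

lemma Dx_mult: "Dx (p * q) = Dx p * q + p * Dx q"
proof (rule poly_eqI)
  fix n
  have "coeff (Dx (p * q)) n = (\<Sum>i\<le>n. pderiv (coeff p i * coeff q (n-i)))"
    by (simp add: coeff_Dx coeff_mult pderiv_sum')
  also have "\<dots> = (\<Sum>i\<le>n. pderiv (coeff p i) * coeff q (n-i) + coeff p i * pderiv (coeff q (n-i)))"
    by (rule sum.cong) (auto simp: pderiv_mult)
  also have "\<dots> = coeff (Dx p * q + p * Dx q) n"
    unfolding coeff_add coeff_mult coeff_Dx sum.distrib ..
  finally show "coeff (Dx (p * q)) n = coeff (Dx p * q + p * Dx q) n" .
qed

lemma Dx_pCons: "Dx (pCons c p) = pCons (pderiv c) (Dx p)"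
  by (simp add: map_poly_pCons)

lemma Dx_chain: "Dx (pcompose p q) = pcompose (Dx p) q + pcompose (pderiv p) q * Dx q"
proof (induction p)
  case 0
  then show ?case by simp
next
  case (pCons c p)
  show ?case
    by (simp add: pcompose_pCons Dx_pCons Dx_add Dx_mult Dx_const pCons.IH pderiv_pCons
        pcompose_add algebra_simps)
qed

definition sig :: "'k::field_char_0 poly \<Rightarrow> 'k poly poly \<Rightarrow> 'k poly poly" where
  "sig h p = pcompose p [:smult 2 h, -1:]"

lemma sig_invol: "sig h (sig h p) = p"
proof -
  have "pcompose [:smult 2 h, -1:] [:smult 2 h, -1:] = ([:0, 1:] :: 'a poly poly)"
    by (simp add: pcompose_pCons)
  then show ?thesis unfolding sig_def by (simp add: pcompose_assoc[symmetric])
qed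

lemma sig_aut: "kalg_aut (sig h)"
  unfolding kalg_aut_def
proof (intro conjI allI)
  show "bij (sig h)"
    by (rule o_bij[of "sig h"]) (auto simp: sig_invol fun_eq_iff)
qed (auto simp: sig_def pcompose_add pcompose_mult const2_def)

lemma sig_ne: "sig h \<noteq> id"
proof
  assume "sig h = id"
  then have "sig h [:0,1:] = [:0,1:]" by simp
  then have "[:smult 2 h, -1:] = ([:0, 1:] :: 'a poly poly)"
    by (simp add: sig_def pcompose_pCons)
  then have "(-1 :: 'a poly) = 1" by simp
  then have "(2 :: 'a poly) = 0" by (simp add: eq_neg_iff_add_eq_0 one_add_one)
  then show False by (metis zero_neq_numeral)
qed

lemma sig_comm:
  assumes "pderiv h = a * h + b"
  shows "sig h (derD a b p) = derD a b (sig h p)"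
proof -
  let ?q = "[:smult 2 h, -1:] :: 'a poly poly"
  have sm2: "\<And>x::'a poly. smult 2 x = x * 2"
    by (simp add: numeral_mult_conv_smult[symmetric] mult.commute)
  have Dq: "Dx ?q = [:smult 2 (pderiv h):]"
    by (simp add: Dx_pCons pderiv_smult pderiv_minus)
  have pq: "pderiv ?q = [:-1:]"
    by (simp add: pderiv_pCons)
  have ba: "pcompose [:b, a:] ?q = [:smult 2 (pderiv h):] - [:b, a:]"
    using sm2[of b] sm2[of "a*h"] by (simp add: pcompose_pCons assms algebra_simps smult_add_right)
  let ?P = "pcompose (pderiv p) ?q" and ?R = "pcompose (Dx p) ?q"
  have L: "derD a b (pcompose p ?q) = ?R + ?P * [:smult 2 (pderiv h):] + [:b,a:] * (?P * [:-1:])"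
    unfolding derD_def by (simp only: Dx_chain pderiv_pcompose Dq pq)
  have Rr: "pcompose (derD a b p) ?q = ?R + ([:smult 2 (pderiv h):] - [:b,a:]) * ?P"
    unfolding derD_def by (simp only: pcompose_add pcompose_mult ba)
  have neg1: "[:-1:] = (-1 :: 'a poly poly)" by (simp add: one_pCons minus_pCons)
  have gen: "\<And>R P C B :: 'a poly poly. R + P*C + B*(P*[:-1:]) = R + (C - B)*P"
    unfolding neg1 by (simp add: algebra_simps)
  show ?thesis unfolding sig_def L Rr by (rule gen[symmetric])
qed

lemma L1:
  fixes u v :: "'a::field_char_0 poly"
  assumes "pderiv u = v * u" "v \<noteq> 0"
  shows "u = 0"
proof (rule ccontr)
  assume u: "u \<noteq> 0"
  show False
  proof (cases "degree u = 0")
    case True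
    then have "pderiv u = 0" using pderiv_eq_0_iff by blast
    with assms u show False by simp
  next
    case False
    then have "degree (pderiv u) < degree u" by (simp add: degree_pderiv)
    also have "degree u \<le> degree (v * u)" using u assms(2) by (simp add: degree_mult_eq)
    finally show False using assms(1) by simp
  qed
qed

lemma coeff_derD:
  fixes a b :: "'a::field_char_0 poly"
  shows "coeff (derD a b p) n = pderiv (coeff p n) + of_nat n * a * coeff p n
     + of_nat (Suc n) * b * coeff p (Suc n)"
  unfolding derD_def
  by (cases n) (simp_all add: coeff_Dx coeff_pderiv algebra_simps)

lemma ker_derD:
  fixes a b :: "'a::field_char_0 poly"
  assumes "a \<noteq> 0" "derD a b k = 0"
  shows "\<exists>c. k = const2 c"
proof -
  have d0: "degree k = 0"
  proof (rule ccontr)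
    assume n: "degree k \<noteq> 0"
    let ?n = "degree k"
    have "coeff (derD a b k) ?n = 0" using assms by simp
    then have "pderiv (coeff k ?n) = (- (of_nat ?n * a)) * coeff k ?n"
      by (simp add: coeff_derD coeff_eq_0 algebra_simps add_eq_0_iff2)
    moreover have "- (of_nat ?n * a) \<noteq> 0" using n assms(1) by simp
    ultimately have "coeff k ?n = 0" by (rule L1)
    then show False using n by (metis degree_0 leading_coeff_0_iff)
  qed
  then obtain k0 where k: "k = [:k0:]" by (metis degree_eq_zeroE)
  have "coeff (derD a b k) 0 = 0" using assms by simp
  then have "pderiv k0 = 0" by (simp add: coeff_derD k)
  then obtain c where "k0 = [:c:]" using pderiv_iszero by blast
  then show ?thesis using k by (auto simp: const2_def)
qed

lemma derD_diff:
  fixes a b :: "'a::field_char_0 poly"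
  shows "derD a b (p - q) = derD a b p - derD a b q"
  unfolding derD_def by (simp add: Dx_diff pderiv_diff algebra_simps smult_diff_right)

lemma hom_shift:
  fixes \<rho> :: "'a::field_char_0 poly poly \<Rightarrow> 'a poly poly"
  assumes hadd: "\<And>p q. \<rho> (p + q) = \<rho> p + \<rho> q"
    and hmul: "\<And>p q. \<rho> (p * q) = \<rho> p * \<rho> q"
    and hc: "\<And>c. \<rho> (const2 c) = const2 c"
    and hX: "\<rho> [:[:0,1:]:] = [:[:c,1:]:]"
  shows "\<rho> [:p:] = [:pcompose p [:c,1:]:]"
proof (induction p)
  case 0
  show ?case using hc[of 0] by (simp add: const2_def)
next
  case (pCons k p)
  have e: "[:pCons k p:] = const2 k + [:[:0,1:]:] * [:p:]"
    by (simp add: const2_def)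
  have "\<rho> [:pCons k p:] = const2 k + [:[:c,1:]:] * [:pcompose p [:c,1:]:]"
    unfolding e hadd hmul hc hX pCons.IH ..
  also have "\<dots> = [:pcompose (pCons k p) [:c,1:]:]"
    by (simp add: const2_def pcompose_pCons)
  finally show ?case .
qed

lemma hom_id:
  fixes \<rho> :: "'a::field_char_0 poly poly \<Rightarrow> 'a poly poly"
  assumes hadd: "\<And>p q. \<rho> (p + q) = \<rho> p + \<rho> q"
    and hmul: "\<And>p q. \<rho> (p * q) = \<rho> p * \<rho> q"
    and hc: "\<And>c. \<rho> (const2 c) = const2 c"
    and hX: "\<rho> [:[:0,1:]:] = [:[:0,1:]:]"
    and hY: "\<rho> [:0,1:] = [:0,1:]"
  shows "\<rho> p = p"
proof (induction p)
  case 0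
  show ?case using hc[of 0] by (simp add: const2_def)
next
  case (pCons q p)
  have e: "pCons q p = [:q:] + [:0,1:] * p" by simp
  have hq: "\<rho> [:q:] = [:q:]" using hom_shift[OF hadd hmul hc, of 0 q] hX by simp
  have "\<rho> (pCons q p) = \<rho> ([:q:] + [:0,1:] * p)" by (rule arg_cong[OF e])
  also have "\<dots> = \<rho> [:q:] + \<rho> [:0,1:] * \<rho> p" by (simp only: hadd hmul)
  also have "\<dots> = [:q:] + [:0,1:] * p" by (simp only: hq hY pCons.IH)
  also have "\<dots> = pCons q p" by (rule e[symmetric])
  finally show ?case .
qed

lemma periodic:
  fixes a :: "'a::field_char_0 poly"
  assumes "pcompose a [:c,1:] = a" "degree a \<ge> 1"
  shows "c = 0"
proof (rule ccontr)
  assume c: "c \<noteq> 0"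
  have sh: "poly a (c + x) = poly a x" for x
    using arg_cong[OF assms(1), of "\<lambda>p. poly p x"] by (simp add: poly_pcompose)
  have k: "poly a (of_nat k * c) = poly a 0" for k
  proof (induction k)
    case 0
    then show ?case by simp
  next
    case (Suc k)
    have "poly a (of_nat (Suc k) * c) = poly a (c + of_nat k * c)"
      by (simp add: algebra_simps)
    also have "\<dots> = poly a (of_nat k * c)" by (rule sh)
    finally show ?case using Suc by simp
  qed
  let ?p = "a - [:poly a 0:]"
  have p0: "?p \<noteq> 0"
  proof
    assume "?p = 0"
    then have "a = [:poly a 0:]" by simp
    then have "degree a = 0" by (metis degree_pCons_0)
    with assms(2) show False by simp
  qed
  have "range (\<lambda>k::nat. of_nat k * c) \<subseteq> {x. poly ?p x = 0}"
    using k by auto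
  moreover have "infinite (range (\<lambda>k::nat. of_nat k * c))"
    by (rule range_inj_infinite) (simp add: inj_def c)
  ultimately show False using poly_roots_finite[OF p0] finite_subset by blast
qed

lemma L_const:
  fixes \<alpha> :: "'a::field_char_0"
  assumes "\<alpha> \<noteq> 0"
  shows "\<exists>h. pderiv h = [:\<alpha>:] * h + b"
proof (induction "degree b" arbitrary: b rule: less_induct)
  case less
  show ?case
  proof (cases "pderiv b = 0")
    case True
    show ?thesis
      by (rule exI[of _ "smult (- 1 / \<alpha>) b"]) (simp add: pderiv_smult pderiv_minus True assms)
  next
    case False
    then have "degree b \<noteq> 0" using pderiv_eq_0_iff by blast
    then have "degree (smult (1/\<alpha>) (pderiv b)) < degree b" by (simp add: degree_pderiv)
    then obtain h2 where h2: "pderiv h2 = [:\<alpha>:] * h2 + smult (1/\<alpha>) (pderiv b)"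
      using less by blast
    show ?thesis
      by (rule exI[of _ "smult (- 1 / \<alpha>) b + h2"])
         (simp add: pderiv_add pderiv_diff pderiv_smult h2 assms algebra_simps)
  qed
qed

lemma forward:
  fixes a b :: "'a::field_char_0 poly"
  assumes a0: "a \<noteq> 0" and da: "degree a \<ge> 1" and rA: "\<rho> \<in> AutD a b" and rid: "\<rho> \<noteq> id"
  shows "\<exists>h. pderiv h = a * h + b"
proof -
  have ka: "kalg_aut \<rho>" and cm: "\<rho> \<circ> derD a b = derD a b \<circ> \<rho>"
    using rA by (auto simp: AutD_def)
  have hadd: "\<And>p q. \<rho> (p + q) = \<rho> p + \<rho> q"
    and hmul: "\<And>p q. \<rho> (p * q) = \<rho> p * \<rho> q"
    and hc: "\<And>c. \<rho> (const2 c) = const2 c"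
    and inj: "inj \<rho>"
    using ka by (auto simp: kalg_aut_def bij_def)
  have comm: "\<And>p. \<rho> (derD a b p) = derD a b (\<rho> p)"
    using cm by (metis comp_apply)
  have r1: "\<rho> 1 = 1" using hc[of 1] by (metis const2_def one_pCons)
  define X :: "'a poly poly" where "X = [:[:0,1:]:]"
  define Y :: "'a poly poly" where "Y = [:0,1:]"
  have dX: "derD a b X = 1"
    unfolding derD_def X_def by (simp add: Dx_const one_pCons pderiv_pCons)
  have dY: "derD a b Y = [:b,a:]"
    unfolding derD_def Y_def by (simp add: Dx_pCons pderiv_pCons)
  have "derD a b (\<rho> X - X) = 0"
    by (simp add: derD_diff comm[symmetric] dX r1)
  then obtain c where "\<rho> X - X = const2 c" using ker_derD[OF a0] by blast
  then have rX: "\<rho> [:[:0,1:]:] = [:[:c,1:]:]"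
    by (simp add: X_def const2_def algebra_simps eq_diff_eq)
  note sh = hom_shift[OF hadd hmul hc rX]
  define g where "g = \<rho> Y"
  define A where "A = pcompose a [:c,1:]"
  define B where "B = pcompose b [:c,1:]"
  have baY: "[:b,a:] = [:b:] + Y * [:a:]" by (simp add: Y_def)
  have dg: "derD a b g = [:B:] + g * [:A:]"
    unfolding g_def comm[symmetric] dY baY hadd hmul sh A_def B_def ..
  have cg: "coeff (derD a b g) n = (if n = 0 then B else 0) + coeff g n * A" for n
    unfolding dg by (simp add: coeff_pCons split: nat.splits)
  define m where "m = degree g"
  have m0: "m \<noteq> 0"
  proof
    assume "m = 0"
    then obtain g0 where g0: "g = [:g0:]" unfolding m_def by (metis degree_eq_zeroE)
    have "\<rho> [:pcompose g0 [:-c,1:]:] = [:pcompose (pcompose g0 [:-c,1:]) [:c,1:]:]"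
      by (rule sh)
    also have "\<dots> = [:g0:]" by (simp add: pcompose_assoc[symmetric] pcompose_pCons)
    also have "\<dots> = \<rho> Y" using g0 g_def by simp
    finally have "[:pcompose g0 [:-c,1:]:] = Y" using inj by (simp add: inj_eq)
    then show False unfolding Y_def by simp
  qed
  have gm: "coeff g m \<noteq> 0"
    using m0 unfolding m_def by (metis degree_0 leading_coeff_0_iff)
  have "coeff (derD a b g) m = coeff g m * A" using cg m0 by simp
  then have "pderiv (coeff g m) = (A - of_nat m * a) * coeff g m"
    by (simp add: coeff_derD m_def coeff_eq_0 algebra_simps)
  then have Am: "A = of_nat m * a"
    using L1 gm by (metis eq_iff_diff_eq_0)
  have "lead_coeff A = lead_coeff a" unfolding A_def
    by (subst lead_coeff_comp) simp_all
  moreover have "lead_coeff (of_nat m * a) = of_nat m * lead_coeff a"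
    by (simp add: lead_coeff_mult of_nat_poly)
  ultimately have "of_nat m * lead_coeff a = lead_coeff a" using Am by simp
  then have "(of_nat m :: 'a) = 1" using a0 by simp
  then have m1: "m = 1" by (metis of_nat_1 of_nat_eq_iff)
  then have "pcompose a [:c,1:] = a" using Am A_def by simp
  then have c0: "c = 0" using periodic da by blast
  then have AB: "A = a" "B = b" unfolding A_def B_def by simp_all
  have "coeff (derD a b g) 1 = coeff g 1 * a" using cg AB by simp
  then have "pderiv (coeff g 1) = 0"
    using m1 by (simp add: coeff_derD m_def coeff_eq_0 algebra_simps)
  then obtain lam where g1: "coeff g 1 = [:lam:]" using pderiv_iszero by blast
  define g0 where "g0 = coeff g 0"
  have gg: "g = [:g0, [:lam:]:]"
    by (rule poly_eqI) (auto simp: g0_def g1[unfolded One_nat_def] coeff_pCons coeff_eq_0 m1[unfolded m_def] split: nat.splits)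
  have "coeff (derD a b g) 0 = b + g0 * a" using cg AB by (simp add: g0_def)
  then have e0: "pderiv g0 = a * g0 + smult (1 - lam) b"
    by (simp add: coeff_derD g1[unfolded One_nat_def] g0_def algebra_simps smult_diff_left mult.commute[of b])
  show ?thesis
  proof (cases "lam = 1")
    case True
    then have "pderiv g0 = a * g0" using e0 by simp
    then have "g0 = 0" using L1 a0 by blast
    then have "\<rho> [:0,1:] = [:0,1:]" using gg True g_def Y_def by simp
    moreover have "\<rho> [:[:0,1:]:] = [:[:0,1:]:]" using rX c0 by simp
    ultimately have "\<rho> p = p" for p using hom_id[OF hadd hmul hc] by blast
    then have "\<rho> = id" by auto
    with rid show ?thesis by simp
  next
    case False
    define k where "k = 1 / (1 - lam)"
    have k1: "k * (1 - lam) = 1" using False by (simp add: k_def)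
    have "pderiv (smult k g0) = smult k (a * g0) + smult k (smult (1 - lam) b)"
      by (simp only: pderiv_smult e0 smult_add_right)
    also have "\<dots> = a * smult k g0 + b"
      by (simp only: smult_smult k1 mult_smult_right smult_1_left)
    finally show ?thesis by blast
  qed
qed

lemma deg_part:
  fixes a b h :: "'a::field_char_0 poly"
  assumes "pderiv h = a * h + b" "b \<noteq> 0" "a \<noteq> 0"
  shows "degree b \<ge> degree a"
proof -
  have h0: "h \<noteq> 0" using assms by auto
  have b: "b = pderiv h + - (a * h)" using assms(1) by simp
  have dah: "degree (a * h) = degree a + degree h" using h0 assms(3) by (simp add: degree_mult_eq)
  show ?thesis
  proof (cases "pderiv h = 0")
    case True
    then show ?thesis using b dah by simp
  next
    case False
    then have "degree h \<noteq> 0" using pderiv_eq_0_iff by blast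
    then have "degree (pderiv h) < degree (- (a * h))" using dah by (simp add: degree_pderiv)
    then have "degree b = degree (a * h)" unfolding b by (subst degree_add_eq_right) simp_all
    then show ?thesis using dah by simp
  qed
qed

theorem corollary3p5:
  fixes a b :: "'k::{alg_closed_field, field_char_0} poly"
  assumes "a \<noteq> 0"
    and "degree a \<ge> 1 \<or> degree b \<ge> 1"
  shows "(AutD a b \<noteq> {id} \<longleftrightarrow> (\<exists>h. pderiv h = a * h + b))
       \<and> (AutD a b \<noteq> {id} \<and> b \<noteq> 0 \<longrightarrow> degree b \<ge> degree a)"
proof -
  have idA: "id \<in> AutD a b"
    by (simp add: AutD_def kalg_aut_def)
  have P1: "AutD a b \<noteq> {id} \<longleftrightarrow> (\<exists>h. pderiv h = a * h + b)"
  proof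
    assume ne: "AutD a b \<noteq> {id}"
    show "\<exists>h. pderiv h = a * h + b"
    proof (cases "degree a = 0")
      case True
      then obtain \<alpha> where a: "a = [:\<alpha>:]" by (metis degree_eq_zeroE)
      with assms(1) have "\<alpha> \<noteq> 0" by simp
      then show ?thesis using L_const a by blast
    next
      case False
      obtain \<rho> where "\<rho> \<in> AutD a b" "\<rho> \<noteq> id" using ne idA by blast
      then show ?thesis using forward[OF assms(1)] False by simp
    qed
  next
    assume "\<exists>h. pderiv h = a * h + b"
    then obtain h where h: "pderiv h = a * h + b" by blast
    have "sig h \<in> AutD a b"
      unfolding AutD_def using sig_aut[of h] sig_comm[OF h] by (auto simp: fun_eq_iff)
    then show "AutD a b \<noteq> {id}" using sig_ne[of h] by blast
  qed
  show ?thesis using P1 deg_part assms(1) by blast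
qed

end
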